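(* Let $N$ be a finite or infinite set and let $\mathcal A'\subseteq\mathcal P(N)$ with $\emptyset,N\in\mathcal A'$. Let $v'\colon\mathcal A'\to\mathbb R$ be a coalition function with $v'(\emptyset)=0$. If $v'$ is bounded below (there is $L\in\mathbb R$ with $v'(S)\ge L$ for all $S\in\mathcal A'$), then $\mathrm{ba\text{-}core}(v')\neq\emptyset$ if and only if $v'$ is bounded-balanced.
   Context: $\mathrm{field}(\mathcal A')$ denotes the smallest field of sets over $N$ containing $\mathcal A'$ (a field of sets over $N$ is a collection containing $\emptyset$, closed under complements in $N$ and finite unions). For a field $\mathcal A$, $\mathrm{ba}(\mathcal A)$ is the set of bounded additive set functions $\mu\colon\mathcal A\to\mathbb R$ ($\sup_{S\in\mathcal A}|\mu(S)|<\infty$ and $\mu(S\cup T)=\mu(S)+\mu(T)$ for disjoint $S,T\in\mathcal A$). The core is $\mathrm{ba\text{-}core}(v')=\{\mu\in\mathrm{ba}(\mathrm{field}(\mathcal A')):\mu(N)=v'(N),\ \mu(S)\ge v'(S)\text{ for all }S\in\mathcal A'\setminus\{N\}\}$. For a field $\mathcal A$ and $v\colon\mathcal A\to\mathbb R$ with $v(\emptyset)=0$: a finite collection $\{S_1,\dots,S_r\}\subseteq\mathcal A$ is balanced if there are reals $\lambda_1,\dots,\lambda_r\ge0$ with $\sum_p\lambda_p\chi_{S_p}=\chi_N$ ($\chi_S$ the characteristic function of $S$ on $N$), and $v$ is balanced if $\sum_p\lambda_p v(S_p)\le v(N)$ for every balanced collection in $\mathcal A$ and every such choice of weights. The game $v'$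 is bounded-balanced if there exists a coalition function $v\colon\mathrm{field}(\mathcal A')\to\mathbb R$ with $v(\emptyset)=0$ that is bounded below and balanced and satisfies $v(S)=v'(S)$ for all $S\in\mathcal A'$. *)

theory Defs
  imports Main "HOL-Library.Indicator_Function"
begin

definition field_of_sets :: "'a set \<Rightarrow> 'a set set \<Rightarrow> bool" where
  "field_of_sets N F \<longleftrightarrow> F \<subseteq> Pow N \<and> {} \<in> F \<and> (\<forall>S\<in>F. N - S \<in> F)
     \<and> (\<forall>S\<in>F. \<forall>T\<in>F. S \<union> T \<in> F)"

definition gen_field :: "'a set \<Rightarrow> 'a set set \<Rightarrow> 'a set set" where
  "gen_field N A = \<Inter>{F. field_of_sets N F \<and> A \<subseteq> F}"

definition ba :: "'a set set \<Rightarrow> ('a set \<Rightarrow> real) set" where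
  "ba F = {\<mu>. (\<exists>B. \<forall>S\<in>F. \<bar>\<mu> S\<bar> \<le> B) \<and>
     (\<forall>S\<in>F. \<forall>T\<in>F. S \<inter> T = {} \<longrightarrow> \<mu> (S \<union> T) = \<mu> S + \<mu> T)}"

definition ba_core :: "'a set \<Rightarrow> 'a set set \<Rightarrow> ('a set \<Rightarrow> real) \<Rightarrow> ('a set \<Rightarrow> real) set" where
  "ba_core N A v' = {\<mu>. \<mu> \<in> ba (gen_field N A) \<and> \<mu> N = v' N \<and>
     (\<forall>S\<in>A - {N}. \<mu> S \<ge> v' S)}"

definition balanced_collection :: "'a set \<Rightarrow> 'a set set \<Rightarrow> 'a set set \<Rightarrow> ('a set \<Rightarrow> real) \<Rightarrow> bool" where
  "balanced_collection N A C lam \<longleftrightarrow> finite C \<and> C \<subseteq> A \<and> (\<forall>S\<in>C. lam S \<ge> 0) \<and>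
     (\<lambda>x. \<Sum>S\<in>C. lam S * indicator S x) = indicator N"

definition balanced_game :: "'a set \<Rightarrow> 'a set set \<Rightarrow> ('a set \<Rightarrow> real) \<Rightarrow> bool" where
  "balanced_game N A v \<longleftrightarrow> (\<forall>C lam. balanced_collection N A C lam \<longrightarrow>
     (\<Sum>S\<in>C. lam S * v S) \<le> v N)"

definition bounded_below_on :: "'a set set \<Rightarrow> ('a set \<Rightarrow> real) \<Rightarrow> bool" where
  "bounded_below_on A v \<longleftrightarrow> (\<exists>L. \<forall>S\<in>A. v S \<ge> L)"

definition bounded_balanced :: "'a set \<Rightarrow> 'a set set \<Rightarrow> ('a set \<Rightarrow> real) \<Rightarrow> bool" where
  "bounded_balanced N A v' \<longleftrightarrow> (\<exists>v. v {} = 0 \<and> bounded_below_on (gen_field N A) v \<and>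
     balanced_game N (gen_field N A) v \<and> (\<forall>S\<in>A. v S = v' S))"

end

theory Submission
  imports Defs
begin


lemma gen_field_field:
  assumes "A \<subseteq> Pow N"
  shows "field_of_sets N (gen_field N A)"
proof -
  have "field_of_sets N (Pow N)" unfolding field_of_sets_def by auto
  hence ne: "Pow N \<in> {F. field_of_sets N F \<and> A \<subseteq> F}" using assms by auto
  show ?thesis unfolding gen_field_def field_of_sets_def
    apply (intro conjI)
    subgoal using ne by auto
    subgoal by (auto simp: field_of_sets_def)
    subgoal by (auto simp: field_of_sets_def)
    subgoal by (auto simp: field_of_sets_def)
    done
qed

lemma gen_field_sub: "A \<subseteq> gen_field N A"
  unfolding gen_field_def by auto

lemma fos_basic:
  assumes "field_of_sets N F"
  shows "F \<subseteq> Pow N" "{} \<in> F" "N \<in> F" "\<And>S. S \<in> F \<Longrightarrow> N - S \<in> F"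
    "\<And>S T. S \<in> F \<Longrightarrow> T \<in> F \<Longrightarrow> S \<union> T \<in> F"
    "\<And>S T. S \<in> F \<Longrightarrow> T \<in> F \<Longrightarrow> S \<inter> T \<in> F"
    "\<And>S T. S \<in> F \<Longrightarrow> T \<in> F \<Longrightarrow> S - T \<in> F"
proof -
  show F: "F \<subseteq> Pow N" "{} \<in> F" using assms unfolding field_of_sets_def by auto
  show c: "\<And>S. S \<in> F \<Longrightarrow> N - S \<in> F" using assms unfolding field_of_sets_def by auto
  show u: "\<And>S T. S \<in> F \<Longrightarrow> T \<in> F \<Longrightarrow> S \<union> T \<in> F" using assms unfolding field_of_sets_def by auto
  show "N \<in> F" using c[OF F(2)] by simp
  show i: "\<And>S T. S \<in> F \<Longrightarrow> T \<in> F \<Longrightarrow> S \<inter> T \<in> F"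
  proof -
    fix S T assume "S \<in> F" "T \<in> F"
    hence "N - ((N - S) \<union> (N - T)) \<in> F" using c u by auto
    moreover have "N - ((N - S) \<union> (N - T)) = S \<inter> T" using F \<open>S \<in> F\<close> \<open>T \<in> F\<close> by auto
    ultimately show "S \<inter> T \<in> F" by simp
  qed
  show "\<And>S T. S \<in> F \<Longrightarrow> T \<in> F \<Longrightarrow> S - T \<in> F"
  proof -
    fix S T assume "S \<in> F" "T \<in> F"
    hence "S \<inter> (N - T) \<in> F" using c i by auto
    moreover have "S \<inter> (N - T) = S - T" using F \<open>S \<in> F\<close> by auto
    ultimately show "S - T \<in> F" by simp
  qed
qed

lemma group_sum:
  assumes "finite I"
  shows "(\<Sum>T\<in>f ` I. (\<Sum>i\<in>{i\<in>I. f i = T}. c i) * g T) = (\<Sum>i\<in>I. c i * (g (f i) :: real))"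
proof -
  have "(\<Sum>i\<in>I. c i * g (f i)) = (\<Sum>T\<in>f ` I. \<Sum>i\<in>{i\<in>I. f i = T}. c i * g (f i))"
    using sum.image_gen[OF assms] by blast
  also have "\<dots> = (\<Sum>T\<in>f ` I. (\<Sum>i\<in>{i\<in>I. f i = T}. c i) * g T)"
    by (rule sum.cong) (auto simp: sum_distrib_right)
  finally show ?thesis by simp
qed

lemma bal_fam:
  assumes bg: "balanced_game N F w" and fin: "finite I" and fI: "\<forall>i\<in>I. f i \<in> F"
    and c: "\<forall>i\<in>I. c i \<ge> 0" and K: "K > 0"
    and eq: "\<forall>x. (\<Sum>i\<in>I. c i * indicator (f i) x) = K * indicator N x"
  shows "(\<Sum>i\<in>I. c i * w (f i)) \<le> K * w N"
proof -
  define C where "C = f ` I"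
  define lam where "lam T = (\<Sum>i\<in>{i\<in>I. f i = T}. c i) / K" for T
  have gs: "(\<Sum>T\<in>C. lam T * g T) = (\<Sum>i\<in>I. c i * g (f i)) / K" for g :: "'a set \<Rightarrow> real"
  proof -
    have "(\<Sum>T\<in>C. lam T * g T) = (\<Sum>T\<in>C. ((\<Sum>i\<in>{i\<in>I. f i = T}. c i) * g T) / K)"
      unfolding lam_def by (rule sum.cong) auto
    also have "\<dots> = (\<Sum>T\<in>C. (\<Sum>i\<in>{i\<in>I. f i = T}. c i) * g T) / K"
      by (rule sum_divide_distrib[symmetric])
    also have "\<dots> = (\<Sum>i\<in>I. c i * g (f i)) / K"
      using group_sum[OF fin, where f=f and c=c and g=g] unfolding C_def by simp
    finally show ?thesis .
  qed
  have bc: "balanced_collection N F C lam"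
    unfolding balanced_collection_def
  proof (intro conjI)
    show "finite C" using fin C_def by simp
    show "C \<subseteq> F" using fI C_def by auto
    show "\<forall>S\<in>C. 0 \<le> lam S" using c K unfolding lam_def by (auto intro!: sum_nonneg divide_nonneg_pos)
    show "(\<lambda>x. \<Sum>S\<in>C. lam S * indicator S x) = indicator N"
    proof
      fix x
      show "(\<Sum>S\<in>C. lam S * indicator S x) = indicator N x"
        using gs[of "\<lambda>S. indicator S x"] eq K by simp
    qed
  qed
  hence "(\<Sum>T\<in>C. lam T * w T) \<le> w N" using bg unfolding balanced_game_def by blast
  thus ?thesis using gs[of w] K by (simp add: divide_le_eq mult.commute)
qed

lemma bal_two:
  assumes bg: "balanced_game N F w" and "A \<in> F" "B \<in> F" "a \<ge> 0" "b \<ge> 0" "K > 0"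
    and eq: "\<forall>x. a * indicator A x + b * indicator B x = K * indicator N x"
  shows "a * w A + b * w B \<le> K * w N"
  using bal_fam[OF bg, of "{0::nat,1}" "\<lambda>i. if i = 0 then A else B" "\<lambda>i. if i = 0 then a else b" K]
    assms by simp

lemma bal_three:
  assumes bg: "balanced_game N F w" and "A \<in> F" "B \<in> F" "D \<in> F" "a \<ge> 0" "b \<ge> 0" "d \<ge> 0" "K > 0"
    and eq: "\<forall>x. a * indicator A x + b * indicator B x + d * indicator D x = K * indicator N x"
  shows "a * w A + b * w B + d * w D \<le> K * w N"
  using bal_fam[OF bg, of "{0::nat,1,2}" "\<lambda>i. if i = 0 then A else if i = 1 then B else D"
      "\<lambda>i. if i = 0 then a else if i = 1 then b else d" K]
    assms by (simp add: algebra_simps)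

lemma add_split:
  fixes \<mu> :: "'a set \<Rightarrow> real"
  assumes fld: "field_of_sets N F"
    and add: "\<forall>S\<in>F. \<forall>T\<in>F. S \<inter> T = {} \<longrightarrow> \<mu> (S \<union> T) = \<mu> S + \<mu> T"
    and "X \<in> F" "Y \<in> F"
  shows "\<mu> X = \<mu> (X \<inter> Y) + \<mu> (X - Y)"
proof -
  have "X \<inter> Y \<in> F" "X - Y \<in> F" using fos_basic[OF fld] assms by auto
  hence "\<mu> ((X \<inter> Y) \<union> (X - Y)) = \<mu> (X \<inter> Y) + \<mu> (X - Y)" using add[rule_format, of "X \<inter> Y" "X - Y"] by auto
  moreover have "(X \<inter> Y) \<union> (X - Y) = X" by auto
  ultimately show ?thesis by simp
qed

lemma add_int:
  fixes \<mu> :: "'a set \<Rightarrow> real" and c :: "'b \<Rightarrow> real"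
  assumes fld: "field_of_sets N F"
    and add: "\<forall>S\<in>F. \<forall>T\<in>F. S \<inter> T = {} \<longrightarrow> \<mu> (S \<union> T) = \<mu> S + \<mu> T"
    and fin: "finite I"
  shows "\<forall>i\<in>I. f i \<in> F \<Longrightarrow> T \<in> F \<Longrightarrow> (\<forall>x. (\<Sum>i\<in>I. c i * indicator (f i) x) = a * indicator T x)
     \<Longrightarrow> (\<Sum>i\<in>I. c i * \<mu> (f i)) = a * \<mu> T"
  using fin
proof (induction I arbitrary: f a T rule: finite_induct)
  case empty
  show ?case
  proof (cases "T = {}")
    case True
    have "\<mu> {} = \<mu> {} + \<mu> {}" using add[rule_format, of "{}" "{}"] fos_basic(2)[OF fld] by simp
    hence "\<mu> {} = 0" by linarith
    thus ?thesis using True by simp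
  next
    case False
    then obtain x where "x \<in> T" by auto
    thus ?thesis using empty(3)[rule_format, of x] by simp
  qed
next
  case (insert i0 I)
  define R where "R = f i0"
  have RF: "R \<in> F" using insert R_def by auto
  have fF: "\<forall>i\<in>I. f i \<in> F" using insert by auto
  note fb = fos_basic[OF fld]
  have E: "(\<Sum>i\<in>I. c i * indicator (f i) x) + c i0 * indicator R x = a * indicator T x" for x
    using insert(6)[rule_format, of x] insert(1,2) R_def by (simp add: add.commute)
  have I1: "(\<Sum>i\<in>I. c i * \<mu> (f i - R)) = a * \<mu> (T - R)"
  proof (rule insert(3))
    show "\<forall>i\<in>I. f i - R \<in> F" using fF RF fb(7) by blast
    show "T - R \<in> F" using insert(5) RF fb(7) by blast
    show "\<forall>x. (\<Sum>i\<in>I. c i * indicator (f i - R) x) = a * indicator (T - R) x"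
    proof
      fix x show "(\<Sum>i\<in>I. c i * indicator (f i - R) x) = a * indicator (T - R) x"
      proof (cases "x \<in> R")
        case True
        hence "\<And>i. indicator (f i - R) x = (0 :: real)" "indicator (T - R) x = (0::real)"
          by (auto simp: indicator_def)
        thus ?thesis by simp
      next
        case False
        hence "\<And>i. indicator (f i - R) x = (indicator (f i) x :: real)"
          "indicator (T - R) x = (indicator T x::real)" "indicator R x = (0::real)"
          by (auto simp: indicator_def)
        thus ?thesis using E[of x] by simp
      qed
    qed
  qed
  have I2: "(\<Sum>i\<in>I. c i * \<mu> (f i \<inter> R \<inter> T)) = (a - c i0) * \<mu> (R \<inter> T)"
  proof (rule insert(3))
    show "\<forall>i\<in>I. f i \<inter> R \<inter> T \<in> F" using fF RF insert(5) fb(6) by blast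
    show "R \<inter> T \<in> F" using insert(5) RF fb(6) by blast
    show "\<forall>x. (\<Sum>i\<in>I. c i * indicator (f i \<inter> R \<inter> T) x) = (a - c i0) * indicator (R \<inter> T) x"
    proof
      fix x show "(\<Sum>i\<in>I. c i * indicator (f i \<inter> R \<inter> T) x) = (a - c i0) * indicator (R \<inter> T) x"
      proof (cases "x \<in> R \<inter> T")
        case True
        hence "\<And>i. indicator (f i \<inter> R \<inter> T) x = (indicator (f i) x :: real)"
          "indicator (R \<inter> T) x = (1::real)" "indicator R x = (1::real)" "indicator T x = (1::real)" by (auto simp: indicator_def)
        thus ?thesis using E[of x] by (simp add: algebra_simps)
      next
        case False
        hence "\<And>i. indicator (f i \<inter> R \<inter> T) x = (0 :: real)" "indicator (R \<inter> T) x = (0::real)"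
          by (auto simp: indicator_def)
        thus ?thesis by simp
      qed
    qed
  qed
  have I3: "(\<Sum>i\<in>I. c i * \<mu> (f i \<inter> R - T)) = (- c i0) * \<mu> (R - T)"
  proof (rule insert(3))
    show "\<forall>i\<in>I. f i \<inter> R - T \<in> F" using fF RF insert(5) fb(6,7) by blast
    show "R - T \<in> F" using insert(5) RF fb(7) by blast
    show "\<forall>x. (\<Sum>i\<in>I. c i * indicator (f i \<inter> R - T) x) = (- c i0) * indicator (R - T) x"
    proof
      fix x show "(\<Sum>i\<in>I. c i * indicator (f i \<inter> R - T) x) = (- c i0) * indicator (R - T) x"
      proof (cases "x \<in> R - T")
        case True
        hence "\<And>i. indicator (f i \<inter> R - T) x = (indicator (f i) x :: real)"
          "indicator (R - T) x = (1::real)" "indicator R x = (1::real)" "indicator T x = (0::real)" by (auto simp: indicator_def)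
        thus ?thesis using E[of x] by (simp add: algebra_simps)
      next
        case False
        hence "\<And>i. indicator (f i \<inter> R - T) x = (0 :: real)" "indicator (R - T) x = (0::real)"
          by (auto simp: indicator_def)
        thus ?thesis by simp
      qed
    qed
  qed
  have sp: "\<mu> (f i) = \<mu> (f i - R) + \<mu> (f i \<inter> R \<inter> T) + \<mu> (f i \<inter> R - T)" if "i \<in> I" for i
  proof -
    have "f i \<in> F" using fF that by blast
    hence "\<mu> (f i) = \<mu> (f i \<inter> R) + \<mu> (f i - R)" using add_split[OF fld add, of "f i" R] RF by simp
    moreover have "\<mu> (f i \<inter> R) = \<mu> (f i \<inter> R \<inter> T) + \<mu> (f i \<inter> R - T)"
      using add_split[OF fld add, of "f i \<inter> R" T] \<open>f i \<in> F\<close> RF insert(5) fb(6) by simp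
    ultimately show ?thesis by simp
  qed
  have "(\<Sum>i\<in>I. c i * \<mu> (f i)) = (\<Sum>i\<in>I. c i * \<mu> (f i - R)) + (\<Sum>i\<in>I. c i * \<mu> (f i \<inter> R \<inter> T))
     + (\<Sum>i\<in>I. c i * \<mu> (f i \<inter> R - T))"
    by (simp add: sp distrib_left sum.distrib cong: sum.cong)
  also have "\<dots> = a * \<mu> (T - R) + (a - c i0) * \<mu> (R \<inter> T) - c i0 * \<mu> (R - T)"
    using I1 I2 I3 by simp
  finally have S: "(\<Sum>i\<in>I. c i * \<mu> (f i)) = a * \<mu> (T - R) + (a - c i0) * \<mu> (R \<inter> T) - c i0 * \<mu> (R - T)" .
  have T1: "\<mu> T = \<mu> (T \<inter> R) + \<mu> (T - R)" using add_split[OF fld add, of T R] insert(5) RF by simp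
  have T2: "\<mu> R = \<mu> (R \<inter> T) + \<mu> (R - T)" using add_split[OF fld add, of R T] insert(5) RF by simp
  have "T \<inter> R = R \<inter> T" by auto
  hence "(\<Sum>i\<in>insert i0 I. c i * \<mu> (f i)) = c i0 * \<mu> R + (\<Sum>i\<in>I. c i * \<mu> (f i))"
    using insert(1,2) R_def by simp
  also have "\<dots> = a * \<mu> T" using S T1 T2 \<open>T \<inter> R = R \<inter> T\<close> by (simp add: algebra_simps)
  finally show ?case .
qed


lemma easy_dir:
  assumes sub: "A' \<subseteq> Pow N" and "{} \<in> A'" and "N \<in> A'" and v0: "v' {} = 0"
    and bb: "bounded_below_on A' v'" and mu: "\<mu> \<in> ba_core N A' v'"
  shows "bounded_balanced N A' v'"
proof -
  define F where "F = gen_field N A'"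
  have fld: "field_of_sets N F" using gen_field_field[OF sub] F_def by simp
  have AF: "A' \<subseteq> F" using gen_field_sub F_def by simp
  have muba: "\<mu> \<in> ba F" and muN: "\<mu> N = v' N" and muge: "\<forall>S\<in>A' - {N}. v' S \<le> \<mu> S"
    using mu unfolding ba_core_def F_def by auto
  obtain B where B: "\<forall>S\<in>F. \<bar>\<mu> S\<bar> \<le> B" using muba unfolding ba_def by auto
  have add: "\<forall>S\<in>F. \<forall>T\<in>F. S \<inter> T = {} \<longrightarrow> \<mu> (S \<union> T) = \<mu> S + \<mu> T"
    using muba unfolding ba_def by auto
  obtain L where L: "\<forall>S\<in>A'. L \<le> v' S" using bb unfolding bounded_below_on_def by auto
  define v where "v S = (if S \<in> A' then v' S else \<mu> S)" for S
  have vle: "v S \<le> \<mu> S" if "S \<in> F" for S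
  proof (cases "S \<in> A'")
    case True
    then show ?thesis using muge muN unfolding v_def by (cases "S = N") auto
  next
    case False
    then show ?thesis unfolding v_def by simp
  qed
  have "v {} = 0" using v0 assms(2) unfolding v_def by simp
  moreover have "bounded_below_on F v"
    unfolding bounded_below_on_def
  proof (intro exI ballI)
    fix S assume "S \<in> F"
    show "min L (- B) \<le> v S"
    proof (cases "S \<in> A'")
      case True thus ?thesis using L unfolding v_def by force
    next
      case False thus ?thesis using B \<open>S \<in> F\<close> unfolding v_def by force
    qed
  qed
  moreover have "balanced_game N F v"
    unfolding balanced_game_def
  proof (intro allI impI)
    fix C lam assume bc: "balanced_collection N F C lam"
    hence fin: "finite C" and CF: "C \<subseteq> F" and lam: "\<forall>S\<in>C. 0 \<le> lam S"
      and eq: "(\<lambda>x. \<Sum>S\<in>C. lam S * indicator S x) = indicator N"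
      unfolding balanced_collection_def by auto
    have "(\<Sum>S\<in>C. lam S * v S) \<le> (\<Sum>S\<in>C. lam S * \<mu> S)"
      by (rule sum_mono) (use lam CF vle in \<open>auto intro: mult_left_mono\<close>)
    also have "\<dots> = 1 * \<mu> N"
    proof (rule add_int[OF fld add fin, where f = "\<lambda>S. S"])
      show "\<forall>i\<in>C. i \<in> F" using CF by auto
      show "N \<in> F" using fos_basic(3)[OF fld] .
      show "\<forall>x. (\<Sum>i\<in>C. lam i * indicator i x) = 1 * indicator N x"
        using eq by (metis mult_1)
    qed
    also have "\<dots> = v N" using muN assms(3) unfolding v_def by simp
    finally show "(\<Sum>S\<in>C. lam S * v S) \<le> v N" .
  qed
  moreover have "\<forall>S\<in>A'. v S = v' S" unfolding v_def by simp
  ultimately show ?thesis unfolding bounded_balanced_def F_def by blast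
qed


lemma pair_le:
  assumes fld: "field_of_sets N F" and bg: "balanced_game N F w" and S: "S \<in> F"
  shows "w S + w (N - S) \<le> w N"
proof -
  have SN: "S \<subseteq> N" using fos_basic(1)[OF fld] S by auto
  have "1 * w S + 1 * w (N - S) \<le> 1 * w N"
  proof (rule bal_two[OF bg S fos_basic(4)[OF fld S]])
    show "\<forall>x. 1 * indicator S x + 1 * indicator (N - S) x = 1 * (indicator N x :: real)"
      using SN by (auto simp: indicator_def)
  qed auto
  thus ?thesis by simp
qed

lemma empty_le:
  assumes fld: "field_of_sets N F" and bg: "balanced_game N F w"
  shows "w {} \<le> 0"
  using pair_le[OF fld bg fos_basic(2)[OF fld]] by simp

lemma lam_le1:
  assumes bc: "balanced_collection N F C lam" and T: "T \<in> C" and x: "x \<in> T"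
  shows "lam T \<le> 1"
proof -
  have fin: "finite C" and lam: "\<forall>S\<in>C. 0 \<le> lam S"
    and eq: "(\<lambda>x. \<Sum>S\<in>C. lam S * indicator S x) = indicator N"
    using bc unfolding balanced_collection_def by auto
  have "lam T * indicator T x \<le> (\<Sum>S\<in>C. lam S * indicator S x)"
    by (rule member_le_sum[OF T]) (use lam fin in auto)
  also have "\<dots> = indicator N x" using eq by metis
  also have "\<dots> \<le> (1::real)" by (simp add: indicator_def)
  finally show ?thesis using x by simp
qed

lemma near_tight:
  assumes bg: "balanced_game N F w" and SN: "S \<noteq> N" and e: "\<epsilon> > 0"
    and nb: "\<not> balanced_game N F (w(S := w S + \<epsilon>))"
  shows "\<exists>C lam. balanced_collection N F C lam \<and> S \<in> C \<and> lam S > 0 \<and>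
     (\<Sum>T\<in>C. lam T * w T) + lam S * \<epsilon> > w N"
proof -
  obtain C lam where bc: "balanced_collection N F C lam"
    and gt: "(\<Sum>T\<in>C. lam T * (w(S := w S + \<epsilon>)) T) > (w(S := w S + \<epsilon>)) N"
    using nb unfolding balanced_game_def by (auto simp: not_le)
  have fin: "finite C" and lam: "\<forall>S\<in>C. 0 \<le> lam S"
    using bc unfolding balanced_collection_def by auto
  have le: "(\<Sum>T\<in>C. lam T * w T) \<le> w N" using bg bc unfolding balanced_game_def by blast
  have gt': "(\<Sum>T\<in>C. lam T * (w(S := w S + \<epsilon>)) T) > w N" using gt SN by simp
  have SC: "S \<in> C"
  proof (rule ccontr)
    assume "S \<notin> C"
    hence "(\<Sum>T\<in>C. lam T * (w(S := w S + \<epsilon>)) T) = (\<Sum>T\<in>C. lam T * w T)"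
      by (intro sum.cong) auto
    thus False using gt' le by simp
  qed
  have "(\<Sum>T\<in>C. lam T * (w(S := w S + \<epsilon>)) T) = (\<Sum>T\<in>C. lam T * w T + (if T = S then lam S * \<epsilon> else 0))"
    by (intro sum.cong) (auto simp: algebra_simps)
  also have "\<dots> = (\<Sum>T\<in>C. lam T * w T) + lam S * \<epsilon>"
    using fin SC by (simp add: sum.distrib)
  finally have eq: "(\<Sum>T\<in>C. lam T * (w(S := w S + \<epsilon>)) T) = (\<Sum>T\<in>C. lam T * w T) + lam S * \<epsilon>" .
  have "lam S > 0"
  proof (rule ccontr)
    assume "\<not> lam S > 0"
    hence "lam S = 0" using lam SC by force
    thus False using eq gt' le by simp
  qed
  thus ?thesis using bc SC eq gt' by auto
qed


lemma compl_ge: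
  assumes fld: "field_of_sets N F" and bg: "balanced_game N F w" and S: "S \<in> F"
    and Sne: "S \<noteq> {}" and SN: "S \<noteq> N"
    and nt: "\<And>\<epsilon> X. \<epsilon> > 0 \<Longrightarrow> X \<in> F \<Longrightarrow> X \<noteq> N \<Longrightarrow> \<exists>C lam. balanced_collection N F C lam \<and> X \<in> C \<and> lam X > 0 \<and>
     (\<Sum>T\<in>C. lam T * w T) + lam X * \<epsilon> > w N"
  shows "w N \<le> w S + w (N - S)"
proof (rule ccontr)
  assume neg: "\<not> w N \<le> w S + w (N - S)"
  define \<epsilon> where "\<epsilon> = (w N - w S - w (N - S)) / 4"
  have e: "\<epsilon> > 0" using neg unfolding \<epsilon>_def by simp
  define S' where "S' = N - S"
  have SsubN: "S \<subseteq> N" using fos_basic(1)[OF fld] S by auto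
  have S'F: "S' \<in> F" using fos_basic(4)[OF fld S] S'_def by simp
  have S'N: "S' \<noteq> N" using Sne SsubN S'_def by auto
  have S'ne: "S' \<noteq> {}" using SN SsubN S'_def by auto
  obtain C lam where bc: "balanced_collection N F C lam" and SC: "S \<in> C" and lpos: "lam S > 0"
    and ntC: "(\<Sum>T\<in>C. lam T * w T) + lam S * \<epsilon> > w N"
    using nt[OF e S SN] by blast
  obtain D mu where bd: "balanced_collection N F D mu" and S'D: "S' \<in> D" and mpos: "mu S' > 0"
    and ntD: "(\<Sum>T\<in>D. mu T * w T) + mu S' * \<epsilon> > w N"
    using nt[OF e S'F S'N] by blast
  define l where "l = lam S"
  define m where "m = mu S'"
  obtain x where "x \<in> S" using Sne by auto
  hence l1: "l \<le> 1" using lam_le1[OF bc SC] l_def by simp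
  obtain x' where "x' \<in> S'" using S'ne by auto
  hence m1: "m \<le> 1" using lam_le1[OF bd S'D] m_def by simp
  have l0: "l > 0" and m0: "m > 0" using lpos mpos l_def m_def by auto
  define K where "K = m + l - l * m"
  have "l * m \<le> l" using m1 l0 by simp
  hence K0: "K > 0" unfolding K_def using m0 by linarith
  have finC: "finite C" and CF: "C \<subseteq> F" and lamnn: "\<forall>S\<in>C. 0 \<le> lam S"
    and eqC: "(\<lambda>x. \<Sum>S\<in>C. lam S * indicator S x) = indicator N"
    using bc unfolding balanced_collection_def by auto
  have finD: "finite D" and DF: "D \<subseteq> F" and munn: "\<forall>S\<in>D. 0 \<le> mu S"
    and eqD: "(\<lambda>x. \<Sum>S\<in>D. mu S * indicator S x) = indicator N"
    using bd unfolding balanced_collection_def by auto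
  define I where "I = (C - {S}) <+> (D - {S'})"
  define f :: "'a set + 'a set \<Rightarrow> 'a set" where "f i = (case i of Inl T \<Rightarrow> T | Inr T \<Rightarrow> T)" for i
  define c :: "'a set + 'a set \<Rightarrow> real" where "c i = (case i of Inl T \<Rightarrow> m * lam T | Inr T \<Rightarrow> l * mu T)" for i
  have finI: "finite I" using finC finD I_def by simp
  have sumI: "(\<Sum>i\<in>I. c i * g (f i)) = m * (\<Sum>T\<in>C - {S}. lam T * g T) + l * (\<Sum>T\<in>D - {S'}. mu T * g T)"
    for g :: "'a set \<Rightarrow> real"
    unfolding I_def using finC finD
    by (simp add: sum.Plus c_def f_def sum_distrib_left mult.assoc)
  have remC: "(\<Sum>T\<in>C. lam T * g T) = l * g S + (\<Sum>T\<in>C - {S}. lam T * g T)" for g :: "'a set \<Rightarrow> real"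
    using sum.remove[OF finC SC] l_def by simp
  have remD: "(\<Sum>T\<in>D. mu T * g T) = m * g S' + (\<Sum>T\<in>D - {S'}. mu T * g T)" for g :: "'a set \<Rightarrow> real"
    using sum.remove[OF finD S'D] m_def by simp
  have ind: "indicator S x + indicator S' x = (indicator N x :: real)" for x
    using SsubN S'_def by (auto simp: indicator_def)
  have bal: "(\<Sum>i\<in>I. c i * w (f i)) \<le> K * w N"
  proof (rule bal_fam[OF bg finI])
    show "\<forall>i\<in>I. f i \<in> F" using CF DF unfolding I_def f_def by auto
    show "\<forall>i\<in>I. 0 \<le> c i" using lamnn munn l0 m0 unfolding I_def c_def by auto
    show "K > 0" by (rule K0)
    show "\<forall>x. (\<Sum>i\<in>I. c i * indicator (f i) x) = K * indicator N x"
    proof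
      fix x
      have a: "(\<Sum>T\<in>C - {S}. lam T * indicator T x) = indicator N x - l * indicator S x"
        using remC[of "\<lambda>T. indicator T x"] eqC by (metis add_diff_cancel_left')
      have b: "(\<Sum>T\<in>D - {S'}. mu T * indicator T x) = indicator N x - m * indicator S' x"
        using remD[of "\<lambda>T. indicator T x"] eqD by (metis add_diff_cancel_left')
      have "(\<Sum>i\<in>I. c i * indicator (f i) x) = m * (indicator N x - l * indicator S x) + l * (indicator N x - m * indicator S' x)"
        using sumI[of "\<lambda>T. indicator T x"] a b by simp
      also have "\<dots> = (m + l) * indicator N x - l * m * (indicator S x + indicator S' x)"
        by (simp add: algebra_simps)
      also have "\<dots> = K * indicator N x" using ind[of x] unfolding K_def by (simp add: algebra_simps)
      finally show "(\<Sum>i\<in>I. c i * indicator (f i) x) = K * indicator N x" .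
    qed
  qed
  define a where "a = (\<Sum>T\<in>C - {S}. lam T * w T)"
  define b where "b = (\<Sum>T\<in>D - {S'}. mu T * w T)"
  have bal': "m * a + l * b \<le> K * w N" using bal sumI[of w] a_def b_def by simp
  have nC: "a + l * w S + l * \<epsilon> > w N" using ntC remC[of w] a_def l_def by simp
  have nD: "b + m * w S' + m * \<epsilon> > w N" using ntD remD[of w] b_def m_def by simp
  have p1: "m * (a + l * w S + l * \<epsilon>) > m * w N" using nC m0 by simp
  have p2: "l * (b + m * w S' + m * \<epsilon>) > l * w N" using nD l0 by simp
  have "l * m * (w S + w S' + 2 * \<epsilon> - w N) > 0"
    using p1 p2 bal' unfolding K_def by (simp add: algebra_simps)
  moreover have "w S + w S' + 2 * \<epsilon> - w N = - 2 * \<epsilon>" unfolding \<epsilon>_def S'_def by (simp add: field_simps)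
  moreover have "l * m * (- 2 * \<epsilon>) < 0" using l0 m0 e by (simp add: mult_pos_neg)
  ultimately show False by simp
qed


lemma hard_dir:
  assumes fld: "field_of_sets N F" and bg: "balanced_game N F v"
    and bb: "bounded_below_on F v" and v0: "v {} = 0"
  shows "\<exists>w. w \<in> ba F \<and> w N = v N \<and> (\<forall>S\<in>F. v S \<le> w S)"
proof -
  obtain L where L: "\<forall>S\<in>F. L \<le> v S" using bb unfolding bounded_below_on_def by auto
  define A where "A = {w. (\<forall>S. S \<notin> F \<longrightarrow> w S = 0) \<and> w N = v N \<and> (\<forall>S\<in>F. v S \<le> w S) \<and> balanced_game N F w}"
  define P where "P = (\<lambda>a b :: 'a set \<Rightarrow> real. \<forall>S\<in>F. a S \<le> b S)"
  define v0' where "v0' = (\<lambda>S. if S \<in> F then v S else 0)"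
  have NF: "N \<in> F" using fos_basic(3)[OF fld] .
  have v0A: "v0' \<in> A"
  proof -
    have "balanced_game N F v0'"
      unfolding balanced_game_def
    proof (intro allI impI)
      fix C lam assume bc: "balanced_collection N F C lam"
      hence CF: "C \<subseteq> F" unfolding balanced_collection_def by auto
      have "(\<Sum>S\<in>C. lam S * v0' S) = (\<Sum>S\<in>C. lam S * v S)"
        by (rule sum.cong) (use CF v0'_def in auto)
      also have "\<dots> \<le> v N" using bg bc unfolding balanced_game_def by blast
      finally show "(\<Sum>S\<in>C. lam S * v0' S) \<le> v0' N" using NF v0'_def by simp
    qed
    thus ?thesis unfolding A_def v0'_def using NF by auto
  qed
  have ub: "w S \<le> v N - L" if "w \<in> A" "S \<in> F" for w S
  proof -
    have "w S + w (N - S) \<le> w N" using pair_le[OF fld _ that(2)] that(1) unfolding A_def by blast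
    moreover have "L \<le> w (N - S)" using L that fos_basic(4)[OF fld that(2)] unfolding A_def by force
    moreover have "w N = v N" using that(1) unfolding A_def by blast
    ultimately show ?thesis by linarith
  qed
  have po: "partial_order_on A (relation_of P A)"
    unfolding partial_order_on_def preorder_on_def
  proof (intro conjI)
    show "relation_of P A \<subseteq> A \<times> A" unfolding relation_of_def by auto
    show "refl_on A (relation_of P A)" unfolding refl_on_def relation_of_def P_def by auto
    show "trans (relation_of P A)" unfolding trans_def relation_of_def P_def by (auto intro: order_trans)
    show "antisym (relation_of P A)" unfolding antisym_def relation_of_def P_def
    proof (intro allI impI)
      fix a b assume h: "(a, b) \<in> {(a, b). (a, b) \<in> A \<times> A \<and> (\<forall>S\<in>F. a S \<le> b S)}"
        "(b, a) \<in> {(a, b). (a, b) \<in> A \<times> A \<and> (\<forall>S\<in>F. a S \<le> b S)}"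
      show "a = b"
      proof
        fix S show "a S = b S"
        proof (cases "S \<in> F")
          case True thus ?thesis using h by (auto intro: order_antisym)
        next
          case False thus ?thesis using h unfolding A_def by auto
        qed
      qed
    qed
  qed
  have v0P: "P v0' a" if "a \<in> A" for a using that unfolding A_def P_def v0'_def by auto
  have ch: "\<exists>u\<in>A. \<forall>a\<in>Ch. P a u" if Ch: "Ch \<in> Chains (relation_of P A)" for Ch
  proof -
    have ChA: "Ch \<subseteq> A" using Ch unfolding Chains_def relation_of_def by auto
    have tot: "\<forall>a\<in>Ch. \<forall>b\<in>Ch. P a b \<or> P b a" using Ch unfolding Chains_def relation_of_def by auto
    define K where "K = insert v0' Ch"
    have KA: "K \<subseteq> A" using ChA v0A K_def by auto
    have totK: "P a b \<or> P b a" if "a \<in> K" "b \<in> K" for a b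
      using that tot v0P KA unfolding K_def by auto
    define u where "u S = (if S \<in> F then Sup ((\<lambda>w. w S) ` K) else 0)" for S
    have bdd: "bdd_above ((\<lambda>w. w S) ` K)" if "S \<in> F" for S
      unfolding bdd_above_def using ub KA that by blast
    have ne: "(\<lambda>w. w S) ` K \<noteq> {}" for S using K_def by auto
    have upper: "a S \<le> u S" if "a \<in> K" "S \<in> F" for a S
      unfolding u_def using that bdd[OF that(2)] by (auto intro: cSup_upper)
    have imN: "(\<lambda>w. w N) ` K = {v N}" using KA K_def unfolding A_def by auto
    have uN: "u N = v N" unfolding u_def using NF imN by simp
    have approx: "\<exists>a\<in>K. u S - \<delta> < a S" if "S \<in> F" "\<delta> > 0" for S \<delta>
    proof -
      have "u S - \<delta> < Sup ((\<lambda>w. w S) ` K)" using that u_def by simp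
      thus ?thesis using less_cSup_iff[OF ne bdd[OF that(1)]] by auto
    qed
    have finapprox: "finite C' \<Longrightarrow> C' \<subseteq> F \<Longrightarrow> \<exists>W\<in>K. \<forall>T\<in>C'. u T - \<delta> < W T" if d: "\<delta> > 0" for C' \<delta>
    proof (induction C' rule: finite_induct)
      case empty thus ?case using K_def by auto
    next
      case (insert T C')
      then obtain W' where W': "W' \<in> K" "\<forall>T\<in>C'. u T - \<delta> < W' T" by auto
      obtain a where a: "a \<in> K" "u T - \<delta> < a T" using approx[OF _ d, of T] insert(4) by auto
      show ?case
      proof (cases "P W' a")
        case True
        have "\<forall>X\<in>insert T C'. u X - \<delta> < a X"
          using W'(2) a(2) True insert(4) unfolding P_def by (auto intro: less_le_trans)
        thus ?thesis using a(1) by blast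
      next
        case False
        hence "P a W'" using totK W'(1) a(1) by blast
        hence "\<forall>X\<in>insert T C'. u X - \<delta> < W' X"
          using W'(2) a(2) insert(4) unfolding P_def by (auto intro: less_le_trans)
        thus ?thesis using W'(1) by blast
      qed
    qed
    have ubal: "balanced_game N F u"
      unfolding balanced_game_def
    proof (intro allI impI)
      fix C lam assume bc: "balanced_collection N F C lam"
      have fin: "finite C" and CF: "C \<subseteq> F" and lam: "\<forall>S\<in>C. 0 \<le> lam S"
        using bc unfolding balanced_collection_def by auto
      show "(\<Sum>S\<in>C. lam S * u S) \<le> u N"
      proof (rule ccontr)
        assume neg: "\<not> (\<Sum>S\<in>C. lam S * u S) \<le> u N"
        define s where "s = (\<Sum>S\<in>C. lam S * u S)"
        define \<Lambda> where "\<Lambda> = (\<Sum>S\<in>C. lam S)"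
        have \<Lambda>0: "\<Lambda> \<ge> 0" unfolding \<Lambda>_def using lam by (auto intro: sum_nonneg)
        define \<delta> where "\<delta> = (s - v N) / (\<Lambda> + 1)"
        have sv: "s > v N" using neg uN s_def by simp
        have d0: "\<delta> > 0" unfolding \<delta>_def using sv \<Lambda>0 by simp
        have dd: "\<delta> * (\<Lambda> + 1) = s - v N" unfolding \<delta>_def using \<Lambda>0 by simp
        obtain W where W: "W \<in> K" "\<forall>T\<in>C. u T - \<delta> < W T" using finapprox[OF d0 fin CF] by blast
        have "s - \<delta> * \<Lambda> = (\<Sum>S\<in>C. lam S * (u S - \<delta>))"
          unfolding s_def \<Lambda>_def by (simp add: algebra_simps sum_subtractf sum_distrib_left sum_distrib_right)
        also have "\<dots> \<le> (\<Sum>S\<in>C. lam S * W S)"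
        proof (rule sum_mono)
          fix S assume "S \<in> C"
          hence "u S - \<delta> \<le> W S" "0 \<le> lam S" using lam W(2) by (auto simp: less_imp_le)
          thus "lam S * (u S - \<delta>) \<le> lam S * W S" by (simp add: mult_left_mono)
        qed
        also have "\<dots> \<le> W N" using KA W(1) bc unfolding A_def balanced_game_def by blast
        also have "\<dots> = v N" using KA W(1) unfolding A_def by blast
        finally have "s - \<delta> * \<Lambda> \<le> v N" .
        thus False using dd d0 by (simp add: algebra_simps)
      qed
    qed
    have uA: "u \<in> A"
      unfolding A_def
    proof (intro CollectI conjI)
      show "\<forall>S. S \<notin> F \<longrightarrow> u S = 0" unfolding u_def by simp
      show "u N = v N" by (rule uN)
      show "\<forall>S\<in>F. v S \<le> u S"
      proof
        fix S assume "S \<in> F"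
        hence "v0' S \<le> u S" using upper[of v0' S] K_def by simp
        thus "v S \<le> u S" using \<open>S \<in> F\<close> v0'_def by simp
      qed
      show "balanced_game N F u" by (rule ubal)
    qed
    moreover have "\<forall>a\<in>Ch. P a u" using upper K_def unfolding P_def by auto
    ultimately show ?thesis by blast
  qed
  obtain w where wA: "w \<in> A" and mx: "\<forall>a\<in>A. P w a \<longrightarrow> a = w"
    using predicate_Zorn[OF po ch] by blast
  have wz: "\<forall>S. S \<notin> F \<longrightarrow> w S = 0" and wN: "w N = v N" and wge: "\<forall>S\<in>F. v S \<le> w S"
    and wbal: "balanced_game N F w" using wA unfolding A_def by auto
  have nt: "\<exists>C lam. balanced_collection N F C lam \<and> X \<in> C \<and> lam X > 0 \<and>
     (\<Sum>T\<in>C. lam T * w T) + lam X * \<epsilon> > w N" if e: "\<epsilon> > 0" and X: "X \<in> F" and XN: "X \<noteq> N" for \<epsilon> X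
  proof (rule near_tight[OF wbal XN e])
    show "\<not> balanced_game N F (w(X := w X + \<epsilon>))"
    proof
      assume b: "balanced_game N F (w(X := w X + \<epsilon>))"
      have "w(X := w X + \<epsilon>) \<in> A" unfolding A_def using b wz wN wge XN X e
        by (auto simp: order_trans)
      moreover have "P w (w(X := w X + \<epsilon>))" unfolding P_def using e by auto
      ultimately have "w(X := w X + \<epsilon>) = w" using mx by blast
      hence "w X + \<epsilon> = w X" by (metis fun_upd_same)
      thus False using e by simp
    qed
  qed
  have we: "w {} = 0" using empty_le[OF fld wbal] wge fos_basic(2)[OF fld] v0 by force
  have compl: "w S + w (N - S) = w N" if S: "S \<in> F" for S
  proof (cases "S = {}")
    case True thus ?thesis using we by simp
  next
    case False
    show ?thesis
    proof (cases "S = N")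
      case True thus ?thesis using we by simp
    next
      case False2: False
      show ?thesis using pair_le[OF fld wbal S] compl_ge[OF fld wbal S False False2 nt] by linarith
    qed
  qed
  have addw: "w (S \<union> T) = w S + w T" if S: "S \<in> F" and T: "T \<in> F" and dj: "S \<inter> T = {}" for S T
  proof -
    define U where "U = S \<union> T"
    have UF: "U \<in> F" using fos_basic(5)[OF fld S T] U_def by simp
    have SN: "S \<subseteq> N" and TN: "T \<subseteq> N" using fos_basic(1)[OF fld] S T by auto
    have "1 * w S + 1 * w T + 1 * w (N - U) \<le> 1 * w N"
    proof (rule bal_three[OF wbal S T fos_basic(4)[OF fld UF]])
      show "\<forall>x. 1 * indicator S x + 1 * indicator T x + 1 * indicator (N - U) x = 1 * (indicator N x :: real)"
        using SN TN dj U_def by (auto simp: indicator_def)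
    qed auto
    hence i: "w S + w T \<le> w U" using compl[OF UF] by simp
    have "1 * w U + 1 * w (N - S) + 1 * w (N - T) \<le> 2 * w N"
    proof (rule bal_three[OF wbal UF fos_basic(4)[OF fld S] fos_basic(4)[OF fld T]])
      show "\<forall>x. 1 * indicator U x + 1 * indicator (N - S) x + 1 * indicator (N - T) x = 2 * (indicator N x :: real)"
        using SN TN dj U_def by (auto simp: indicator_def)
    qed auto
    hence "w U \<le> w S + w T" using compl[OF S] compl[OF T] by simp
    thus ?thesis using i U_def by simp
  qed
  have bnd: "\<forall>S\<in>F. \<bar>w S\<bar> \<le> \<bar>v N\<bar> + \<bar>L\<bar>"
  proof
    fix S assume S: "S \<in> F"
    have "L \<le> w S" using L wge S by force
    moreover have "w S \<le> v N - L" using ub[OF wA S] .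
    ultimately show "\<bar>w S\<bar> \<le> \<bar>v N\<bar> + \<bar>L\<bar>" by linarith
  qed
  have "w \<in> ba F" unfolding ba_def using bnd addw by blast
  thus ?thesis using wN wge by blast
qed


theorem theorem8:
  fixes N :: "'a set" and A' :: "'a set set" and v' :: "'a set \<Rightarrow> real"
  assumes "A' \<subseteq> Pow N" and "{} \<in> A'" and "N \<in> A'"
    and "v' {} = 0"
    and "bounded_below_on A' v'"
  shows "ba_core N A' v' \<noteq> {} \<longleftrightarrow> bounded_balanced N A' v'"
proof
  assume "ba_core N A' v' \<noteq> {}"
  then obtain \<mu> where "\<mu> \<in> ba_core N A' v'" by auto
  thus "bounded_balanced N A' v'" using easy_dir[OF assms] by blast
next
  assume "bounded_balanced N A' v'"
  then obtain v where v0: "v {} = 0" and bb: "bounded_below_on (gen_field N A') v"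
    and bg: "balanced_game N (gen_field N A') v" and agree: "\<forall>S\<in>A'. v S = v' S"
    unfolding bounded_balanced_def by blast
  have fld: "field_of_sets N (gen_field N A')" using gen_field_field[OF assms(1)] .
  obtain w where w: "w \<in> ba (gen_field N A')" "w N = v N" "\<forall>S\<in>gen_field N A'. v S \<le> w S"
    using hard_dir[OF fld bg bb v0] by blast
  have "w \<in> ba_core N A' v'"
    unfolding ba_core_def
  proof (intro CollectI conjI ballI)
    show "w \<in> ba (gen_field N A')" using w(1) .
    show "w N = v' N" using w(2) agree assms(3) by simp
    fix S assume "S \<in> A' - {N}"
    hence "S \<in> A'" "S \<in> gen_field N A'" using gen_field_sub[of A' N] by auto
    thus "v' S \<le> w S" using w(3) agree by force
  qed
  thus "ba_core N A' v' \<noteq> {}" by auto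
qed

end
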